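(* With $f$ as in the context (and $n\ge 3$), $U=\{x\in V : xf\in v_0\wedge V\}$, and every $g\in G$ satisfies $Ug=U$.
   Context: Let $p$ be a prime, $\mathbb{F}=\mathrm{GF}(p)$, and $n\ge 3$. Let $V$ be an $\mathbb{F}$-vector space with basis $v_0,\dots,v_n$, $U=\langle v_1,\dots,v_n\rangle$, $W=\Lambda^2V$, and $v_0\wedge V=\{v_0\wedge y:y\in V\}$. Maps are written on the right. For $g\in\mathrm{End}(V)$, $\widehat g$ denotes the induced linear map of $W$, $(x\wedge y)\widehat g=(xg)\wedge(yg)$. The linear map $f:V\to W$ is given by $v_0f=\sum_{i=1}^n b_i\, v_0\wedge v_i+\sum_{1\le j<k\le n}c_{j,k}\, v_j\wedge v_k$ and $v_if=\sum_{j=1}^n A_{i,j}\, v_0\wedge v_j$ for $1\le i\le n$, where $b\in\mathbb{F}^n$ and $c=(c_{j,k})\in\mathbb{F}^{\binom n2}$ are nonzero, and $A$ is the $n\times n$ companion matrix of the minimal polynomial over $\mathbb{F}$ of a primitive element of $\mathrm{GF}(p^n)$. Let $G=\{g\in \mathrm{GL}(V) : (vg)f=(vf)\widehat{g}\ \text{for all } v\in V\}$. *)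

theory Defs
  imports "HOL-Computational_Algebra.Polynomial" "HOL-Library.Function_Algebras"
begin

(* Coordinates: V = F^{n+1} with basis v_0..v_n, vectors are functions nat => 'a
   vanishing outside {0..n}.  W = Lambda^2 V is represented in the basis
   v_j /\ v_k (j < k <= n): an element is a function nat => nat => 'a giving its
   coordinate at (j,k) (zero outside 0 <= j < k <= n).  Maps act on the right,
   matrices are nat => nat => 'a, and x g has coordinates sum_i x_i g_{i,j}. *)

definition vecs :: "nat \<Rightarrow> (nat \<Rightarrow> 'a::zero) set" where
  "vecs n = {x. \<forall>i>n. x i = 0}"

definition basis_vec :: "nat \<Rightarrow> nat \<Rightarrow> 'a::{zero,one}" where
  "basis_vec i = (\<lambda>j. if j = i then 1 else 0)"

definition Usp :: "nat \<Rightarrow> (nat \<Rightarrow> 'a::zero) set" where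
  "Usp n = {x \<in> vecs n. x 0 = 0}"

definition wedge :: "nat \<Rightarrow> (nat \<Rightarrow> 'a::comm_ring) \<Rightarrow> (nat \<Rightarrow> 'a) \<Rightarrow> nat \<Rightarrow> nat \<Rightarrow> 'a" where
  "wedge n x y = (\<lambda>j k. if j < k \<and> k \<le> n then x j * y k - x k * y j else 0)"

definition scaleW :: "'a::times \<Rightarrow> (nat \<Rightarrow> nat \<Rightarrow> 'a) \<Rightarrow> nat \<Rightarrow> nat \<Rightarrow> 'a" where
  "scaleW a w = (\<lambda>j k. a * w j k)"

definition v0_wedge_V :: "nat \<Rightarrow> (nat \<Rightarrow> nat \<Rightarrow> 'a::comm_ring_1) set" where
  "v0_wedge_V n = {wedge n (basis_vec 0) y | y. y \<in> vecs n}"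

definition is_endo :: "nat \<Rightarrow> (nat \<Rightarrow> nat \<Rightarrow> 'a::zero) \<Rightarrow> bool" where
  "is_endo n g \<longleftrightarrow> (\<forall>i j. (n < i \<or> n < j) \<longrightarrow> g i j = 0)"

definition vmat :: "nat \<Rightarrow> (nat \<Rightarrow> 'a::comm_ring) \<Rightarrow> (nat \<Rightarrow> nat \<Rightarrow> 'a) \<Rightarrow> nat \<Rightarrow> 'a" where
  "vmat n x g = (\<lambda>j. if j \<le> n then (\<Sum>i\<le>n. x i * g i j) else 0)"

definition is_GL :: "nat \<Rightarrow> (nat \<Rightarrow> nat \<Rightarrow> 'a::comm_ring_1) \<Rightarrow> bool" where
  "is_GL n g \<longleftrightarrow> is_endo n g \<and>
     (\<exists>h. is_endo n h \<and> (\<forall>i\<le>n. \<forall>j\<le>n. (\<Sum>l\<le>n. g i l * h l j) = (if i = j then 1 else 0)))"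

definition hat :: "nat \<Rightarrow> (nat \<Rightarrow> nat \<Rightarrow> 'a::comm_ring) \<Rightarrow> (nat \<Rightarrow> nat \<Rightarrow> 'a) \<Rightarrow> nat \<Rightarrow> nat \<Rightarrow> 'a" where
  "hat n g w = (\<Sum>j\<le>n. \<Sum>k\<in>{j<..n}. scaleW (w j k) (wedge n (\<lambda>i. g j i) (\<lambda>i. g k i)))"

definition fmap :: "nat \<Rightarrow> (nat \<Rightarrow> 'a::comm_ring_1) \<Rightarrow> (nat \<Rightarrow> nat \<Rightarrow> 'a) \<Rightarrow> (nat \<Rightarrow> nat \<Rightarrow> 'a)
     \<Rightarrow> (nat \<Rightarrow> 'a) \<Rightarrow> nat \<Rightarrow> nat \<Rightarrow> 'a" where
  "fmap n b c A x =
     scaleW (x 0) ((\<Sum>i\<in>{1..n}. scaleW (b i) (wedge n (basis_vec 0) (basis_vec i)))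
        + (\<Sum>j\<in>{1..n}. \<Sum>k\<in>{j<..n}. scaleW (c j k) (wedge n (basis_vec j) (basis_vec k))))
   + (\<Sum>i\<in>{1..n}. scaleW (x i) (\<Sum>j\<in>{1..n}. scaleW (A i j) (wedge n (basis_vec 0) (basis_vec j))))"

definition Ggrp :: "nat \<Rightarrow> (nat \<Rightarrow> 'a::comm_ring_1) \<Rightarrow> (nat \<Rightarrow> nat \<Rightarrow> 'a) \<Rightarrow> (nat \<Rightarrow> nat \<Rightarrow> 'a)
     \<Rightarrow> (nat \<Rightarrow> nat \<Rightarrow> 'a) set" where
  "Ggrp n b c A = {g. is_GL n g \<and>
     (\<forall>v\<in>vecs n. fmap n b c A (vmat n v g) = hat n g (fmap n b c A v))}"

text \<open>Companion matrix (indices 1..n) of a monic q = x^n + a_{n-1} x^{n-1} + ... + a_0,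
  for the right action on row vectors: v_i A = v_{i+1} (i < n),
  v_n A = - sum_j a_{j-1} v_j.\<close>
definition companion :: "nat \<Rightarrow> 'a::comm_ring_1 poly \<Rightarrow> nat \<Rightarrow> nat \<Rightarrow> 'a" where
  "companion n q = (\<lambda>i j. if 1 \<le> i \<and> i \<le> n \<and> 1 \<le> j \<and> j \<le> n then
       (if i < n then (if j = i + 1 then 1 else 0) else - coeff q (j - 1)) else 0)"

definition is_ring_hom :: "('a::ring_1 \<Rightarrow> 'b::ring_1) \<Rightarrow> bool" where
  "is_ring_hom \<phi> \<longleftrightarrow> \<phi> 1 = 1 \<and> (\<forall>x y. \<phi> (x + y) = \<phi> x + \<phi> y) \<and> (\<forall>x y. \<phi> (x * y) = \<phi> x * \<phi> y)"

definition is_min_poly :: "('a::field \<Rightarrow> 'b::field) \<Rightarrow> 'b \<Rightarrow> 'a poly \<Rightarrow> bool" where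
  "is_min_poly \<phi> \<alpha> q \<longleftrightarrow> lead_coeff q = 1 \<and> poly (map_poly \<phi> q) \<alpha> = 0 \<and>
     (\<forall>r. r \<noteq> 0 \<and> poly (map_poly \<phi> r) \<alpha> = 0 \<longrightarrow> degree q \<le> degree r)"

definition is_primitive_elem :: "'b::field \<Rightarrow> bool" where
  "is_primitive_elem \<alpha> \<longleftrightarrow> \<alpha> \<noteq> 0 \<and> (\<forall>y. y \<noteq> 0 \<longrightarrow> (\<exists>k::nat. y = \<alpha> ^ k))"

end

theory Submission
  imports Defs "Jordan_Normal_Form.Determinant"
begin


lemma sum_fun_apply: "(\<Sum>i\<in>S. F i) x = (\<Sum>i\<in>S. F i x)"
  by (induct S rule: infinite_finite_induct) auto

lemma fmap_supp:
  assumes "\<not> (j < k \<and> k \<le> n)"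
  shows "fmap n b c A x j k = (0::'a::comm_ring_1)"
proof -
  have h: "(j < k \<and> k \<le> n) = False" using assms by simp
  show ?thesis by (simp add: fmap_def sum_fun_apply scaleW_def wedge_def h)
qed

lemma fmap_U:
  fixes x :: "nat \<Rightarrow> 'a::comm_ring_1"
  assumes "1 \<le> j" "j < k" "k \<le> n"
  shows "fmap n b c A x j k = x 0 * c j k"
proof -
  have t1: "(\<Sum>i\<in>{1..n}. scaleW (b i) (wedge n (basis_vec 0) (basis_vec i))) j k = (0::'a)"
    using assms by (simp add: sum_fun_apply scaleW_def wedge_def basis_vec_def)
  have t3: "(\<Sum>i\<in>{1..n}. scaleW (x i) (\<Sum>j\<in>{1..n}. scaleW (A i j) (wedge n (basis_vec 0) (basis_vec j)))) j k = 0"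
    using assms by (simp add: sum_fun_apply scaleW_def wedge_def basis_vec_def)
  have inner: "(\<Sum>k'\<in>{j'<..n}. c j' k' * wedge n (basis_vec j') (basis_vec k') j k)
      = (if j' = j then c j k else 0)" if "j' \<in> {1..n}" for j'
  proof (cases "j' = j")
    case True
    then have "(\<Sum>k'\<in>{j'<..n}. c j' k' * wedge n (basis_vec j') (basis_vec k') j k)
       = (\<Sum>k'\<in>{j'<..n}. if k' = k then c j k else 0)"
      using assms by (intro sum.cong) (auto simp: wedge_def basis_vec_def)
    also have "\<dots> = c j k" using assms True by (simp add: sum.delta)
    finally show ?thesis using True by simp
  next
    case False
    have "(\<Sum>k'\<in>{j'<..n}. c j' k' * wedge n (basis_vec j') (basis_vec k') j k) = 0"
      using assms False by (intro sum.neutral) (auto simp: wedge_def basis_vec_def)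
    then show ?thesis using False by simp
  qed
  have t2: "(\<Sum>j\<in>{1..n}. \<Sum>k\<in>{j<..n}. scaleW (c j k) (wedge n (basis_vec j) (basis_vec k))) j k = c j k"
  proof -
    have "(\<Sum>j\<in>{1..n}. \<Sum>k\<in>{j<..n}. scaleW (c j k) (wedge n (basis_vec j) (basis_vec k))) j k
      = (\<Sum>j'\<in>{1..n}. \<Sum>k'\<in>{j'<..n}. c j' k' * wedge n (basis_vec j') (basis_vec k') j k)"
      by (simp add: sum_fun_apply scaleW_def)
    also have "\<dots> = (\<Sum>j'\<in>{1..n}. if j' = j then c j k else 0)"
      by (rule sum.cong) (auto simp: inner)
    also have "\<dots> = c j k" using assms by (simp add: sum.delta)
    finally show ?thesis .
  qed
  show ?thesis unfolding fmap_def using t1 t2 t3 by (simp add: scaleW_def)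
qed

lemma fmap_0:
  fixes x :: "nat \<Rightarrow> 'a::comm_ring_1"
  assumes "1 \<le> k" "k \<le> n"
  shows "fmap n b c A x 0 k = x 0 * b k + (\<Sum>i\<in>{1..n}. x i * A i k)"
proof -
  have t1: "(\<Sum>i\<in>{1..n}. scaleW (b i) (wedge n (basis_vec 0) (basis_vec i))) 0 k = b k"
  proof -
    have "(\<Sum>i\<in>{1..n}. scaleW (b i) (wedge n (basis_vec 0) (basis_vec i))) 0 k
       = (\<Sum>i\<in>{1..n}. if i = k then b k else 0)"
      unfolding sum_fun_apply using assms by (intro sum.cong) (auto simp: scaleW_def wedge_def basis_vec_def)
    then show ?thesis using assms by (simp add: sum.delta')
  qed
  have t2: "(\<Sum>j\<in>{1..n}. \<Sum>k\<in>{j<..n}. scaleW (c j k) (wedge n (basis_vec j) (basis_vec k))) 0 k = 0"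
    using assms by (simp add: sum_fun_apply scaleW_def wedge_def basis_vec_def)
  have t3: "(\<Sum>i\<in>{1..n}. scaleW (x i) (\<Sum>j\<in>{1..n}. scaleW (A i j) (wedge n (basis_vec 0) (basis_vec j)))) 0 k
     = (\<Sum>i\<in>{1..n}. x i * A i k)"
    unfolding sum_fun_apply scaleW_def
  proof (intro sum.cong refl arg_cong2[where f="(*)"])
    fix i
    have "(\<Sum>j\<in>{1..n}. A i j * wedge n (basis_vec 0) (basis_vec j) 0 k)
       = (\<Sum>j\<in>{1..n}. if j = k then A i k else 0)"
      using assms by (intro sum.cong) (auto simp: wedge_def basis_vec_def)
    then show "(\<Sum>j\<in>{1..n}. A i j * wedge n (basis_vec 0) (basis_vec j) 0 k) = A i k"
      using assms by (simp add: sum.delta')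
  qed
  show ?thesis unfolding fmap_def using t1 t2 t3 by (simp add: scaleW_def)
qed

lemma in_v0_wedge:
  fixes w :: "nat \<Rightarrow> nat \<Rightarrow> 'a::comm_ring_1"
  assumes supp: "\<And>j k. \<not> (j < k \<and> k \<le> n) \<Longrightarrow> w j k = 0"
  shows "w \<in> v0_wedge_V n \<longleftrightarrow> (\<forall>j k. 1 \<le> j \<and> j < k \<and> k \<le> n \<longrightarrow> w j k = 0)"
proof
  assume "w \<in> v0_wedge_V n"
  then obtain y where "w = wedge n (basis_vec 0) y" unfolding v0_wedge_V_def by auto
  then show "\<forall>j k. 1 \<le> j \<and> j < k \<and> k \<le> n \<longrightarrow> w j k = 0"
    by (auto simp: wedge_def basis_vec_def)
next
  assume H: "\<forall>j k. 1 \<le> j \<and> j < k \<and> k \<le> n \<longrightarrow> w j k = 0"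
  define y where "y = (\<lambda>k. if 0 < k \<and> k \<le> n then w 0 k else (0::'a))"
  have "y \<in> vecs n" by (simp add: y_def vecs_def)
  moreover have "w = wedge n (basis_vec 0) y"
  proof (intro ext)
    fix j k
    show "w j k = wedge n (basis_vec 0) y j k"
    proof (cases "j < k \<and> k \<le> n")
      case True
      then show ?thesis using H by (cases "j = 0") (auto simp: wedge_def basis_vec_def y_def)
    next
      case False
      then have h: "(j < k \<and> k \<le> n) = False" by simp
      show ?thesis using supp[OF False] by (simp add: wedge_def h)
    qed
  qed
  ultimately show "w \<in> v0_wedge_V n" unfolding v0_wedge_V_def by auto
qed



lemma helper: assumes h: "(x::'a::comm_ring) = - y * w + (- z) * u" shows "y * w = - x - z * u"
  by (simp add: h algebra_simps)

lemma core:
  fixes G H :: "nat \<Rightarrow> nat \<Rightarrow> 'a::field" and c :: "nat \<Rightarrow> nat \<Rightarrow> 'a"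
    and beta Q :: "nat \<Rightarrow> 'a"
  defines "W \<equiv> (\<lambda>m j k. G 0 j * G m k - G 0 k * G m j)"
  assumes n3: "n \<ge> 3"
    and cnz: "1 \<le> j0" "j0 < k0" "k0 \<le> n" "c j0 k0 \<noteq> 0"
    and Q0: "Q 0 \<noteq> 0"
    and E1: "\<And>i j k. 1 \<le> i \<Longrightarrow> i < n \<Longrightarrow> 1 \<le> j \<Longrightarrow> j < k \<Longrightarrow> k \<le> n \<Longrightarrow>
               beta i * c j k = W (i+1) j k"
    and E2: "\<And>j k. 1 \<le> j \<Longrightarrow> j < k \<Longrightarrow> k \<le> n \<Longrightarrow>
               beta n * c j k = (\<Sum>m\<in>{1..n}. - Q (m - 1) * W m j k)"
    and inv: "\<And>p k. 1 \<le> p \<Longrightarrow> p \<le> n \<Longrightarrow> 1 \<le> k \<Longrightarrow> k \<le> n \<Longrightarrow>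
               (\<Sum>l\<le>n. H p l * G l k) = (if p = k then 1 else 0)"
  shows "\<forall>i. 1 \<le> i \<and> i \<le> n \<longrightarrow> beta i = 0"
proof -
  have step1: "\<exists>t. \<forall>j k. 1 \<le> j \<and> j < k \<and> k \<le> n \<longrightarrow> W m j k = t * c j k"
    if m: "1 \<le> m" "m \<le> n" for m
  proof (cases "m = 1")
    case False
    then show ?thesis using m E1[of "m - 1"] by (intro exI[of _ "beta (m - 1)"]) auto
  next
    case True
    define T where "T = - (beta n + (\<Sum>m\<in>{2..n}. Q (m - 1) * beta (m - 1))) / Q 0"
    show ?thesis
    proof (intro exI[of _ T] allI impI)
      fix j k assume jk: "1 \<le> j \<and> j < k \<and> k \<le> n"
      have "beta n * c j k = (\<Sum>m\<in>{1..n}. - Q (m - 1) * W m j k)" using E2 jk by auto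
      also have "\<dots> = - Q 0 * W 1 j k + (\<Sum>m\<in>{2..n}. - Q (m - 1) * W m j k)"
        using n3 by (subst sum.atLeast_Suc_atMost) (auto simp: numeral_2_eq_2)
      also have "(\<Sum>m\<in>{2..n}. - Q (m - 1) * W m j k) = (\<Sum>m\<in>{2..n}. - Q (m - 1) * beta (m - 1)) * c j k"
        unfolding sum_distrib_right
        using E1 jk by (intro sum.cong refl) (auto simp: mult.assoc)
      finally have F: "beta n * c j k = - Q 0 * W 1 j k + (\<Sum>m\<in>{2..n}. - Q (m - 1) * beta (m - 1)) * c j k" .
      have S: "(\<Sum>m\<in>{2..n}. - Q (m - 1) * beta (m - 1)) = - (\<Sum>m\<in>{2..n}. Q (m - 1) * beta (m - 1))"
        by (simp add: sum_negf)
      have "Q 0 * W 1 j k = - (beta n + (\<Sum>m\<in>{2..n}. Q (m - 1) * beta (m - 1))) * c j k"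
        using helper[OF F[unfolded S]] by (simp add: algebra_simps)
      then show "W m j k = T * c j k" using Q0 True unfolding T_def
        by (simp add: field_simps)
    qed
  qed
  then obtain t where t: "\<And>m j k. 1 \<le> m \<Longrightarrow> m \<le> n \<Longrightarrow> 1 \<le> j \<Longrightarrow> j < k \<Longrightarrow> k \<le> n \<Longrightarrow>
       W m j k = t m * c j k"
    by metis
  show ?thesis
  proof (cases "\<forall>j. 1 \<le> j \<and> j \<le> n \<longrightarrow> G 0 j = 0")
    case True
    then have W0: "W m j0 k0 = 0" for m using cnz unfolding W_def by auto
    show ?thesis
    proof (intro allI impI)
      fix i assume i: "1 \<le> i \<and> i \<le> n"
      show "beta i = 0"
      proof (cases "i = n")
        case True
        then show ?thesis using E2[OF cnz(1-3)] W0 cnz(4) by simp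
      next
        case False
        then show ?thesis using E1[OF _ _ cnz(1-3), of i] W0 cnz(4) i by simp
      qed
    qed
  next
    case False
    then obtain m0 where m0: "1 \<le> m0" "m0 \<le> n" "G 0 m0 \<noteq> 0" by auto
    define s where "s p = (\<Sum>l\<le>n. H p l * (if l = 0 then 0 else t l))" for p
    have D: "G 0 j * (if p = k then 1 else 0) - G 0 k * (if p = j then 1 else 0) = s p * c j k"
      if p: "1 \<le> p" "p \<le> n" and jk: "1 \<le> j" "j < k" "k \<le> n" for p j k
    proof -
      have "G 0 j * (if p = k then 1 else 0) - G 0 k * (if p = j then 1 else 0)
          = G 0 j * (\<Sum>l\<le>n. H p l * G l k) - G 0 k * (\<Sum>l\<le>n. H p l * G l j)"
        using inv p jk by simp
      also have "\<dots> = (\<Sum>l\<le>n. H p l * W l j k)"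
        unfolding W_def by (simp add: sum_distrib_left sum_subtractf algebra_simps)
      also have "\<dots> = (\<Sum>l\<le>n. H p l * (if l = 0 then 0 else t l) * c j k)"
        using t jk by (intro sum.cong refl) (auto simp: W_def)
      also have "\<dots> = s p * c j k" by (simp add: s_def sum_distrib_right)
      finally show ?thesis .
    qed
    have pair: "s p \<noteq> 0 \<and> c (min m0 p) (max m0 p) \<noteq> 0" if p: "1 \<le> p" "p \<le> n" "p \<noteq> m0" for p
    proof (cases "m0 < p")
      case True
      from D[OF p(1,2) m0(1) True p(2)] have "G 0 m0 = s p * c m0 p" using True by simp
      then show ?thesis using m0 True by auto
    next
      case False
      then have lt: "p < m0" using p by auto
      from D[OF p(1,2) p(1) lt m0(2)] have "- G 0 m0 = s p * c p m0" using lt by simp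
      then show ?thesis using m0 lt by auto
    qed
    have zero: "s p' = 0" if p: "1 \<le> p" "p \<le> n" "p \<noteq> m0" and p': "1 \<le> p'" "p' \<le> n" "p' \<noteq> m0" "p' \<noteq> p" for p p'
    proof -
      have "1 \<le> min m0 p" "min m0 p < max m0 p" "max m0 p \<le> n" using p m0 by auto
      from D[OF p'(1,2) this] have "s p' * c (min m0 p) (max m0 p) = 0"
        using p p' by (auto simp: min_def max_def)
      then show ?thesis using pair[OF p] by simp
    qed
    obtain p1 p2 where "p1 \<in> {1,2,3}" "p2 \<in> {1,2,3}" "p1 \<noteq> m0" "p2 \<noteq> m0" "p1 \<noteq> p2"
    proof (cases "m0 = 1")
      case True then show ?thesis using that[of 2 3] by auto
    next
      case False then show ?thesis using that[of 1 "if m0 = 2 then 3 else 2"] by auto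
    qed
    then have "1 \<le> p1" "p1 \<le> n" "1 \<le> p2" "p2 \<le> n" "p1 \<noteq> m0" "p2 \<noteq> m0" "p2 \<noteq> p1" using n3 by auto
    then show ?thesis using zero pair by blast
  qed
qed


lemma q0_nz:
  fixes \<phi> :: "'a::field \<Rightarrow> 'b::field"
  assumes "is_ring_hom \<phi>" "is_primitive_elem \<alpha>" "is_min_poly \<phi> \<alpha> q"
  shows "coeff q 0 \<noteq> 0"
proof
  assume q0: "coeff q 0 = 0"
  have phi0: "\<phi> 0 = 0"
  proof -
    have "\<phi> (0 + 0) = \<phi> 0 + \<phi> 0" using assms(1) unfolding is_ring_hom_def by blast
    then show ?thesis by (metis add_0 add_cancel_left_right)
  qed
  have a0: "\<alpha> \<noteq> 0" using assms(2) unfolding is_primitive_elem_def by simp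
  have lc: "lead_coeff q = 1" and pq: "poly (map_poly \<phi> q) \<alpha> = 0"
    and mn: "\<And>r. r \<noteq> 0 \<Longrightarrow> poly (map_poly \<phi> r) \<alpha> = 0 \<Longrightarrow> degree q \<le> degree r"
    using assms(3) unfolding is_min_poly_def by auto
  obtain a r where qr: "q = pCons a r" by (cases q) auto
  have a: "a = 0" using q0 qr by simp
  have rnz: "r \<noteq> 0" using lc qr a by auto
  have "poly (map_poly \<phi> q) \<alpha> = \<alpha> * poly (map_poly \<phi> r) \<alpha>"
    using qr a phi0 by (simp add: map_poly_pCons)
  then have "poly (map_poly \<phi> r) \<alpha> = 0" using pq a0 by simp
  from mn[OF rnz this] have "degree q \<le> degree r" .
  moreover have "degree q = Suc (degree r)" using qr rnz by (simp add: degree_pCons_eq)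
  ultimately show False by simp
qed

lemma mat_inv_comm:
  fixes g h :: "nat \<Rightarrow> nat \<Rightarrow> 'a::field"
  assumes "\<forall>i\<le>n. \<forall>j\<le>n. (\<Sum>l\<le>n. g i l * h l j) = (if i = j then 1 else 0)"
  shows "\<forall>i\<le>n. \<forall>j\<le>n. (\<Sum>l\<le>n. h i l * g l j) = (if i = j then 1 else 0)"
proof -
  define G where "G = mat (Suc n) (Suc n) (\<lambda>(i,j). g i j)"
  define H where "H = mat (Suc n) (Suc n) (\<lambda>(i,j). h i j)"
  have GC: "G \<in> carrier_mat (Suc n) (Suc n)" and HC: "H \<in> carrier_mat (Suc n) (Suc n)"
    by (auto simp: G_def H_def)
  have e: "\<And>A B :: nat \<Rightarrow> nat \<Rightarrow> 'a. \<And>i j. i < Suc n \<Longrightarrow> j < Suc n \<Longrightarrow>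
     (mat (Suc n) (Suc n) (\<lambda>(i,j). A i j) * mat (Suc n) (Suc n) (\<lambda>(i,j). B i j)) $$ (i,j)
       = (\<Sum>l\<le>n. A i l * B l j)"
    by (simp add: scalar_prod_def atLeast0LessThan lessThan_Suc_atMost)
  have "G * H = 1\<^sub>m (Suc n)"
  proof (rule eq_matI)
    fix i j assume "i < dim_row (1\<^sub>m (Suc n) :: 'a mat)" "j < dim_col (1\<^sub>m (Suc n) :: 'a mat)"
    then have ij: "i < Suc n" "j < Suc n" by auto
    show "(G * H) $$ (i, j) = 1\<^sub>m (Suc n) $$ (i, j)"
      unfolding G_def H_def e[OF ij] using assms ij by auto
  qed (auto simp: G_def H_def)
  then have "H * G = 1\<^sub>m (Suc n)" using mat_mult_left_right_inverse[OF GC HC] by simp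
  then show ?thesis
    by (metis (no_types, lifting) H_def G_def e index_one_mat(1) le_imp_less_Suc)
qed

lemma hat_apply:
  "hat n g w j k = (\<Sum>j'\<le>n. \<Sum>k'\<in>{j'<..n}. w j' k' * wedge n (\<lambda>i. g j' i) (\<lambda>i. g k' i) j k)"
  by (simp add: hat_def sum_fun_apply scaleW_def)

lemma key_eq:
  fixes g :: "nat \<Rightarrow> nat \<Rightarrow> 'a::field"
  assumes eq: "fmap n b c A (vmat n (basis_vec i) g) = hat n g (fmap n b c A (basis_vec i))"
    and i: "1 \<le> i" "i \<le> n" and jk: "1 \<le> j" "j < k" "k \<le> n"
  shows "g i 0 * c j k = (\<Sum>m\<in>{1..n}. A i m * (g 0 j * g m k - g 0 k * g m j))"
proof -
  have "vmat n (basis_vec i) g 0 = (\<Sum>l\<le>n. basis_vec i l * g l 0)" by (simp add: vmat_def)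
  also have "\<dots> = (\<Sum>l\<le>n. if l = i then g i 0 else 0)"
    by (rule sum.cong) (auto simp: basis_vec_def)
  also have "\<dots> = g i 0" using i by (simp add: sum.delta')
  finally have L: "fmap n b c A (vmat n (basis_vec i) g) j k = g i 0 * c j k"
    by (simp add: fmap_U[OF jk])
  let ?w = "fmap n b c A (basis_vec i)"
  let ?F = "\<lambda>j'. \<Sum>k'\<in>{j'<..n}. ?w j' k' * wedge n (\<lambda>l. g j' l) (\<lambda>l. g k' l) j k"
  have "hat n g ?w j k = ?F 0 + (\<Sum>j'<n. ?F (Suc j'))"
    unfolding hat_apply by (rule sum.atMost_shift)
  also have "(\<Sum>j'<n. ?F (Suc j')) = 0"
  proof (rule sum.neutral, rule ballI)
    fix j' assume "j' \<in> {..<n}"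
    show "?F (Suc j') = 0"
    proof (rule sum.neutral, rule ballI)
      fix k' assume "k' \<in> {Suc j'<..n}"
      then have "?w (Suc j') k' = basis_vec i 0 * c (Suc j') k'" by (intro fmap_U) auto
      then show "?w (Suc j') k' * wedge n (\<lambda>l. g (Suc j') l) (\<lambda>l. g k' l) j k = 0"
        using i by (simp add: basis_vec_def)
    qed
  qed
  also have "?F 0 = (\<Sum>m\<in>{1..n}. A i m * (g 0 j * g m k - g 0 k * g m j))"
  proof -
    have "{0<..n} = {1..n}" by auto
    moreover have "?w 0 m = A i m" if "m \<in> {1..n}" for m
    proof -
      have "?w 0 m = basis_vec i 0 * b m + (\<Sum>i'\<in>{1..n}. basis_vec i i' * A i' m)"
        using that by (intro fmap_0) auto
      also have "\<dots> = (\<Sum>i'\<in>{1..n}. basis_vec i i' * A i' m)"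
        using i by (simp add: basis_vec_def)
      also have "\<dots> = (\<Sum>i'\<in>{1..n}. if i' = i then A i m else 0)"
        by (rule sum.cong) (auto simp: basis_vec_def)
      also have "\<dots> = A i m" using i by (simp add: sum.delta')
      finally show ?thesis .
    qed
    ultimately show ?thesis using jk by (auto intro!: sum.cong simp: wedge_def)
  qed
  finally show ?thesis using L eq by simp
qed



theorem lemma3p2:
  fixes p n :: nat
    and b :: "nat \<Rightarrow> 'a::{field,finite}"
    and c :: "nat \<Rightarrow> nat \<Rightarrow> 'a"
    and \<phi> :: "'a \<Rightarrow> 'b::{field,finite}"
    and \<alpha> :: 'b
    and q :: "'a poly"
  assumes "prime p"
    and "card (UNIV :: 'a set) = p"
    and "card (UNIV :: 'b set) = p ^ n"
    and "n \<ge> 3"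
    and "is_ring_hom \<phi>"
    and "is_primitive_elem \<alpha>"
    and "is_min_poly \<phi> \<alpha> q"
    and "\<exists>i\<in>{1..n}. b i \<noteq> 0"
    and "\<exists>j k. 1 \<le> j \<and> j < k \<and> k \<le> n \<and> c j k \<noteq> 0"
  shows "Usp n = {x \<in> vecs n. fmap n b c (companion n q) x \<in> v0_wedge_V n}
    \<and> (\<forall>g\<in>Ggrp n b c (companion n q). (\<lambda>x. vmat n x g) ` Usp n = Usp n)"
proof -
  let ?A = "companion n q"
  obtain j0 k0 where cnz: "1 \<le> j0" "j0 < k0" "k0 \<le> n" "c j0 k0 \<noteq> 0" using assms(9) by blast
  have mem: "fmap n b c ?A x \<in> v0_wedge_V n \<longleftrightarrow> x 0 = 0" for x :: "nat \<Rightarrow> 'a"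
  proof -
    have "fmap n b c ?A x \<in> v0_wedge_V n \<longleftrightarrow>
        (\<forall>j k. 1 \<le> j \<and> j < k \<and> k \<le> n \<longrightarrow> fmap n b c ?A x j k = 0)"
      by (rule in_v0_wedge) (rule fmap_supp)
    also have "\<dots> \<longleftrightarrow> (\<forall>j k. 1 \<le> j \<and> j < k \<and> k \<le> n \<longrightarrow> x 0 * c j k = 0)"
      by (auto simp: fmap_U)
    also have "\<dots> \<longleftrightarrow> x 0 = 0" using cnz by auto
    finally show ?thesis .
  qed
  have part1: "Usp n = {x \<in> vecs n. fmap n b c ?A x \<in> v0_wedge_V n}"
    unfolding Usp_def mem by simp
  have part2: "(\<lambda>x. vmat n x g) ` Usp n = Usp n" if gG: "g \<in> Ggrp n b c ?A" for g
  proof -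
    from gG have endo: "is_endo n g" and
      eqv: "\<And>v. v \<in> vecs n \<Longrightarrow> fmap n b c ?A (vmat n v g) = hat n g (fmap n b c ?A v)"
      unfolding Ggrp_def is_GL_def by auto
    from gG obtain h where GH: "\<forall>i\<le>n. \<forall>j\<le>n. (\<Sum>l\<le>n. g i l * h l j) = (if i = j then 1 else 0)"
      unfolding Ggrp_def is_GL_def by auto
    have HG: "\<And>i j. i \<le> n \<Longrightarrow> j \<le> n \<Longrightarrow> (\<Sum>l\<le>n. h i l * g l j) = (if i = j then 1 else 0)"
      using mat_inv_comm[OF GH] by blast
    have bv: "basis_vec i \<in> vecs n" if "i \<le> n" for i
      using that by (simp add: vecs_def basis_vec_def)
    have KE: "g i 0 * c j k = (\<Sum>m\<in>{1..n}. ?A i m * (g 0 j * g m k - g 0 k * g m j))"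
      if "1 \<le> i" "i \<le> n" "1 \<le> j" "j < k" "k \<le> n" for i j k
      using key_eq[OF eqv[OF bv] that] that by simp
    have q0: "coeff q 0 \<noteq> 0" using q0_nz assms(5-7) by blast
    have col0: "\<forall>i. 1 \<le> i \<and> i \<le> n \<longrightarrow> g i 0 = 0"
    proof (rule core[where G = g and H = h and c = c and Q = "coeff q" and beta = "\<lambda>i. g i 0",
          OF assms(4) cnz q0])
      fix i j k assume h: "1 \<le> i" "i < n" "1 \<le> j" "j < k" "k \<le> n"
      have "g i 0 * c j k = (\<Sum>m\<in>{1..n}. ?A i m * (g 0 j * g m k - g 0 k * g m j))"
        using KE h by simp
      also have "\<dots> = (\<Sum>m\<in>{1..n}. if m = i + 1 then g 0 j * g (i+1) k - g 0 k * g (i+1) j else 0)"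
        using h by (intro sum.cong) (auto simp: companion_def)
      also have "\<dots> = g 0 j * g (i+1) k - g 0 k * g (i+1) j" using h by (simp add: sum.delta')
      finally show "g i 0 * c j k = g 0 j * g (i+1) k - g 0 k * g (i+1) j" .
    next
      fix j k assume h: "1 \<le> j" "j < k" "k \<le> n"
      have "g n 0 * c j k = (\<Sum>m\<in>{1..n}. ?A n m * (g 0 j * g m k - g 0 k * g m j))"
        using KE h assms(4) by simp
      also have "\<dots> = (\<Sum>m\<in>{1..n}. - coeff q (m - 1) * (g 0 j * g m k - g 0 k * g m j))"
        using h by (intro sum.cong) (auto simp: companion_def)
      finally show "g n 0 * c j k = (\<Sum>m\<in>{1..n}. - coeff q (m - 1) * (g 0 j * g m k - g 0 k * g m j))" .
    next
      fix p k assume "1 \<le> p" "p \<le> n" "1 \<le> k" "k \<le> n"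
      then show "(\<Sum>l\<le>n. h p l * g l k) = (if p = k then 1 else 0)" using HG by simp
    qed
    have v0: "vmat n u g 0 = u 0 * g 0 0" for u
    proof -
      have "vmat n u g 0 = (\<Sum>l\<le>n. u l * g l 0)" by (simp add: vmat_def)
      also have "\<dots> = (\<Sum>l\<le>n. if l = 0 then u 0 * g 0 0 else 0)"
        using col0 by (intro sum.cong) auto
      also have "\<dots> = u 0 * g 0 0" by simp
      finally show ?thesis .
    qed
    have g00: "g 0 0 \<noteq> 0"
    proof -
      have "(\<Sum>l\<le>n. h 0 l * g l 0) = 1" using HG[of 0 0] by simp
      moreover have "(\<Sum>l\<le>n. h 0 l * g l 0) = (\<Sum>l\<le>n. if l = 0 then h 0 0 * g 0 0 else 0)"
        using col0 by (intro sum.cong) auto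
      ultimately have "h 0 0 * g 0 0 = 1" by simp
      then show ?thesis by (metis mult_zero_right zero_neq_one)
    qed
    have vv: "vmat n u g \<in> vecs n" for u :: "nat \<Rightarrow> 'a" and g
      by (simp add: vmat_def vecs_def)
    show ?thesis
    proof
      show "(\<lambda>x. vmat n x g) ` Usp n \<subseteq> Usp n"
        using v0 vv by (auto simp: Usp_def)
    next
      show "Usp n \<subseteq> (\<lambda>x. vmat n x g) ` Usp n"
      proof
        fix x :: "nat \<Rightarrow> 'a" assume x: "x \<in> Usp n"
        define u where "u = vmat n x h"
        have bk: "vmat n u g = x"
        proof
          fix j
          show "vmat n u g j = x j"
          proof (cases "j \<le> n")
            case False then show ?thesis using x by (simp add: vmat_def Usp_def vecs_def)
          next
            case True
            have "vmat n u g j = (\<Sum>i\<le>n. (\<Sum>l\<le>n. x l * h l i) * g i j)"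
              using True by (simp add: vmat_def u_def)
            also have "\<dots> = (\<Sum>l\<le>n. x l * (\<Sum>i\<le>n. h l i * g i j))"
              by (simp add: sum_distrib_left sum_distrib_right mult.assoc) (rule sum.swap)
            also have "\<dots> = (\<Sum>l\<le>n. if l = j then x j else 0)"
              using HG True by (intro sum.cong) auto
            also have "\<dots> = x j" using True by simp
            finally show ?thesis .
          qed
        qed
        have "u 0 = 0"
        proof -
          have "x 0 = u 0 * g 0 0" using v0[of u] bk by simp
          then show ?thesis using x g00 by (simp add: Usp_def)
        qed
        moreover have "u \<in> vecs n" unfolding u_def by (rule vv)
        ultimately have "u \<in> Usp n" by (simp add: Usp_def)
        then show "x \<in> (\<lambda>x. vmat n x g) ` Usp n" using bk by force
      qed
    qed
  qed
  show ?thesis using part1 part2 by blast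
qed


end
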